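(* Let $G$ be a finitely generated group of polynomial growth of degree $d$, i.e. for some (equivalently any) finite symmetric generating set $S$ containing the identity there is $C>0$ with $|S^n|\le Cn^d$ for all $n\in\mathbb{N}$. Then $G$ has uniformly $(1/d)$-almost flat coset spaces.
   Context: $S^n=\{s_1\cdots s_n:s_i\in S\}$. For a finite-index subgroup $K\le G$, $\operatorname{diam}_S(G/K)=\min\{n\in\mathbb{N}:S^nK=G\}$. $G$ has uniformly $\alpha$-almost flat coset spaces if there exists $\varepsilon>0$ such that $\operatorname{diam}_S(G/K)\ge\varepsilon[G:K]^\alpha$ for every finite-index subgroup $K\le G$ (this does not depend on $S$). *)

theory Defs
  imports "HOL-Algebra.Algebra" "HOL-Analysis.Analysis"
begin

primrec set_power :: "('a, 'b) monoid_scheme \<Rightarrow> 'a set \<Rightarrow> nat \<Rightarrow> 'a set" where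
  "set_power G S 0 = {\<one>\<^bsub>G\<^esub>}"
| "set_power G S (Suc n) = set_mult G (set_power G S n) S"

definition coset_diam :: "('a, 'b) monoid_scheme \<Rightarrow> 'a set \<Rightarrow> 'a set \<Rightarrow> nat" where
  "coset_diam G S K = (LEAST n. n \<ge> 1 \<and> set_mult G (set_power G S n) K = carrier G)"

definition unif_almost_flat_cosets :: "('a, 'b) monoid_scheme \<Rightarrow> 'a set \<Rightarrow> real \<Rightarrow> bool" where
  "unif_almost_flat_cosets G S \<alpha> \<longleftrightarrow>
     (\<exists>\<epsilon>>0. \<forall>K. subgroup K G \<and> finite (rcosets\<^bsub>G\<^esub> K) \<longrightarrow>
        real (coset_diam G S K) \<ge> \<epsilon> * real (card (rcosets\<^bsub>G\<^esub> K)) powr \<alpha>)"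

end

theory Submission
  imports Defs
begin

lemma sp_carrier:
  assumes "group G" "S \<subseteq> carrier G"
  shows "set_power G S n \<subseteq> carrier G"
proof (induction n)
  case 0 then show ?case using assms by (simp add: group.is_monoid monoid.one_closed)
next
  case (Suc n) then show ?case using assms
    by (auto simp: set_mult_def intro: monoid.m_closed[OF group.is_monoid[OF assms(1)]])
qed

lemma sp_finite:
  assumes "finite S"
  shows "finite (set_power G S n)"
proof (induction n)
  case 0 then show ?case by simp
next
  case (Suc n) then show ?case using assms by (simp add: set_mult_def)
qed

lemma sp_mono1:
  assumes "group G" "S \<subseteq> carrier G" "\<one>\<^bsub>G\<^esub> \<in> S"
  shows "set_power G S n \<subseteq> set_power G S (Suc n)"
proof
  fix x assume x: "x \<in> set_power G S n"
  have "x \<in> carrier G" using x sp_carrier[OF assms(1,2)] by blast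
  then have "x = x \<otimes>\<^bsub>G\<^esub> \<one>\<^bsub>G\<^esub>" using assms(1) by (simp add: group.is_monoid monoid.r_one)
  then show "x \<in> set_power G S (Suc n)" using x assms(3) by (auto simp: set_mult_def)
qed

lemma sp_mono:
  assumes "group G" "S \<subseteq> carrier G" "\<one>\<^bsub>G\<^esub> \<in> S" "m \<le> n"
  shows "set_power G S m \<subseteq> set_power G S n"
  using assms(4)
proof (induction n)
  case 0 then show ?case by simp
next
  case (Suc n) then show ?case using sp_mono1[OF assms(1-3), of n]
    by (metis le_Suc_eq order_refl order_trans)
qed

lemma sp_mult:
  assumes "group G" "S \<subseteq> carrier G" "x \<in> set_power G S m"
  shows "y \<in> set_power G S n \<Longrightarrow> x \<otimes>\<^bsub>G\<^esub> y \<in> set_power G S (m + n)"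
proof (induction n arbitrary: y)
  case 0
  have "x \<in> carrier G" using assms sp_carrier by blast
  then show ?case using 0 assms(1,3) by (simp add: group.is_monoid monoid.r_one)
next
  case (Suc n)
  then obtain y' s where y: "y' \<in> set_power G S n" "s \<in> S" "y = y' \<otimes>\<^bsub>G\<^esub> s"
    by (auto simp: set_mult_def)
  have c: "x \<in> carrier G" "y' \<in> carrier G" "s \<in> carrier G"
    using assms y sp_carrier[OF assms(1,2)] by blast+
  have "x \<otimes>\<^bsub>G\<^esub> y = (x \<otimes>\<^bsub>G\<^esub> y') \<otimes>\<^bsub>G\<^esub> s"
    using c y(3) assms(1) by (simp add: group.is_monoid monoid.m_assoc)
  moreover have "x \<otimes>\<^bsub>G\<^esub> y' \<in> set_power G S (m + n)" using Suc.IH y(1) by blast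
  ultimately show ?case using y(2) by (auto simp: set_mult_def)
qed

lemma sp_inv:
  assumes "group G" "S \<subseteq> carrier G" "\<forall>s\<in>S. inv\<^bsub>G\<^esub> s \<in> S"
  shows "x \<in> set_power G S n \<Longrightarrow> \<exists>m. inv\<^bsub>G\<^esub> x \<in> set_power G S m"
proof (induction n arbitrary: x)
  case 0 then show ?case using assms(1) by (intro exI[of _ 0]) (simp add: group.is_monoid monoid.inv_one)
next
  case (Suc n)
  then obtain y' s where y: "y' \<in> set_power G S n" "s \<in> S" "x = y' \<otimes>\<^bsub>G\<^esub> s"
    by (auto simp: set_mult_def)
  obtain m where m: "inv\<^bsub>G\<^esub> y' \<in> set_power G S m" using Suc.IH y(1) by blast
  have c: "y' \<in> carrier G" "s \<in> carrier G"
    using assms y sp_carrier[OF assms(1,2)] by blast+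
  have e: "inv\<^bsub>G\<^esub> x = inv\<^bsub>G\<^esub> s \<otimes>\<^bsub>G\<^esub> inv\<^bsub>G\<^esub> y'"
    using c y(3) assms(1) by (simp add: group.inv_mult_group)
  have "inv\<^bsub>G\<^esub> s \<in> set_power G S 1"
  proof -
    have "inv\<^bsub>G\<^esub> s \<in> carrier G" using c assms(1) by (simp add: group.inv_closed)
    then have "inv\<^bsub>G\<^esub> s = \<one>\<^bsub>G\<^esub> \<otimes>\<^bsub>G\<^esub> inv\<^bsub>G\<^esub> s" using assms(1)
      by (simp add: group.is_monoid monoid.l_one)
    then show ?thesis using assms(3) y(2) by (auto simp: set_mult_def)
  qed
  then show ?case using sp_mult[OF assms(1,2)] m e by metis
qed

lemma sp_union:
  assumes "group G" "S \<subseteq> carrier G" "\<forall>s\<in>S. inv\<^bsub>G\<^esub> s \<in> S" "\<one>\<^bsub>G\<^esub> \<in> S"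
    "generate G S = carrier G" "g \<in> carrier G"
  shows "\<exists>n. g \<in> set_power G S n"
proof -
  let ?T = "\<Union>n. set_power G S n"
  have sub: "subgroup ?T G"
  proof (rule group.subgroupI[OF assms(1)])
    show "?T \<subseteq> carrier G" using sp_carrier[OF assms(1,2)] by blast
    show "?T \<noteq> {}" by (metis UNIV_I UN_iff empty_iff set_power.simps(1) singletonI)
    show "inv\<^bsub>G\<^esub> a \<in> ?T" if "a \<in> ?T" for a using that sp_inv[OF assms(1-3)] by blast
    show "a \<otimes>\<^bsub>G\<^esub> b \<in> ?T" if "a \<in> ?T" "b \<in> ?T" for a b
      using that sp_mult[OF assms(1,2)] by blast
  qed
  have "S \<subseteq> ?T"
  proof
    fix s assume s: "s \<in> S"
    then have "s \<in> carrier G" using assms(2) by blast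
    then have "s = \<one>\<^bsub>G\<^esub> \<otimes>\<^bsub>G\<^esub> s" using assms(1) by (simp add: group.is_monoid monoid.l_one)
    then have "s \<in> set_power G S 1" using s by (auto simp: set_mult_def)
    then show "s \<in> ?T" by blast
  qed
  then have "generate G S \<subseteq> ?T" using group.generate_subgroup_incl[OF assms(1) _ sub] by blast
  then show ?thesis using assms(5,6) by blast
qed

theorem lemma2p2:
  fixes G :: "('a, 'b) monoid_scheme" and S :: "'a set" and d :: nat
  assumes "group G"
    and "finite S" and "S \<subseteq> carrier G" and "\<one>\<^bsub>G\<^esub> \<in> S"
    and "\<forall>s\<in>S. inv\<^bsub>G\<^esub> s \<in> S"
    and "generate G S = carrier G"
    and "d > 0"
    and "\<exists>C>0. \<forall>n::nat. n \<ge> 1 \<longrightarrow> real (card (set_power G S n)) \<le> C * real n ^ d"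
  shows "unif_almost_flat_cosets G S (1 / real d)"
proof -
  interpret group G by (rule assms(1))
  obtain C where C: "C > 0" "\<And>n::nat. n \<ge> 1 \<Longrightarrow> real (card (set_power G S n)) \<le> C * real n ^ d"
    using assms(8) by blast
  define eps where "eps = 1 / C powr (1 / real d)"
  have eps: "eps > 0" using C by (simp add: eps_def)
  have main: "real (coset_diam G S K) \<ge> eps * real (card (rcosets\<^bsub>G\<^esub> K)) powr (1 / real d)"
    if K: "subgroup K G" "finite (rcosets\<^bsub>G\<^esub> K)" for K
  proof -
    let ?R = "rcosets\<^bsub>G\<^esub> K"
    have Kc: "K \<subseteq> carrier G" using K(1) subgroup.subset by blast
    have hex: "\<exists>h. h \<in> carrier G \<and> c = K #>\<^bsub>G\<^esub> h" if "c \<in> ?R" for c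
      using that unfolding RCOSETS_def by blast
    define h where "h c = (SOME h. h \<in> carrier G \<and> c = K #>\<^bsub>G\<^esub> h)" for c
    have h: "h c \<in> carrier G" "c = K #>\<^bsub>G\<^esub> h c" if "c \<in> ?R" for c
      using someI_ex[OF hex[OF that]] unfolding h_def by blast+
    have nex: "\<exists>n. inv\<^bsub>G\<^esub> (h c) \<in> set_power G S n" if "c \<in> ?R" for c
      using sp_union[OF assms(1,3,5,4,6)] h[OF that] by simp
    define nn where "nn c = (SOME n. inv\<^bsub>G\<^esub> (h c) \<in> set_power G S n)" for c
    have nn: "inv\<^bsub>G\<^esub> (h c) \<in> set_power G S (nn c)" if "c \<in> ?R" for c
      using someI_ex[OF nex[OF that]] unfolding nn_def by blast
    define N where "N = Suc (Max (nn ` ?R))"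
    have P: "N \<ge> 1 \<and> set_mult G (set_power G S N) K = carrier G"
    proof
      show "N \<ge> 1" by (simp add: N_def)
      show "set_mult G (set_power G S N) K = carrier G"
      proof
        show "set_mult G (set_power G S N) K \<subseteq> carrier G"
          using sp_carrier[OF assms(1,3), of N] Kc by (auto simp: set_mult_def)
        show "carrier G \<subseteq> set_mult G (set_power G S N) K"
        proof
          fix g assume g: "g \<in> carrier G"
          let ?c = "K #>\<^bsub>G\<^esub> inv\<^bsub>G\<^esub> g"
          have c: "?c \<in> ?R" using g unfolding RCOSETS_def by auto
          have "inv\<^bsub>G\<^esub> g \<in> K #>\<^bsub>G\<^esub> h ?c" using h(2)[OF c] rcos_self[of "inv\<^bsub>G\<^esub> g" K] g K(1) by auto
          then obtain k where k: "k \<in> K" "inv\<^bsub>G\<^esub> g = k \<otimes>\<^bsub>G\<^esub> h ?c" unfolding r_coset_def by blast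
          have kc: "k \<in> carrier G" using k Kc by blast
          have "g = inv\<^bsub>G\<^esub> (inv\<^bsub>G\<^esub> g)" using g by simp
          also have "\<dots> = inv\<^bsub>G\<^esub> (h ?c) \<otimes>\<^bsub>G\<^esub> inv\<^bsub>G\<^esub> k" using k(2) kc h(1)[OF c] inv_mult_group[of k "h ?c"] by simp
          finally have ge: "g = inv\<^bsub>G\<^esub> (h ?c) \<otimes>\<^bsub>G\<^esub> inv\<^bsub>G\<^esub> k" .
          have "nn ?c \<le> Max (nn ` ?R)" using c K(2) by simp
          then have "nn ?c \<le> N" by (simp add: N_def)
          then have "inv\<^bsub>G\<^esub> (h ?c) \<in> set_power G S N"
            using sp_mono[OF assms(1,3,4)] nn[OF c] by blast
          moreover have "inv\<^bsub>G\<^esub> k \<in> K" using k K(1) subgroup.m_inv_closed by fastforce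
          ultimately show "g \<in> set_mult G (set_power G S N) K"
            using ge unfolding set_mult_def by blast
        qed
      qed
    qed
    define n where "n = coset_diam G S K"
    have Pn: "n \<ge> 1 \<and> set_mult G (set_power G S n) K = carrier G"
      unfolding n_def coset_diam_def by (rule LeastI_ex) (use P in blast)
    have sub: "?R \<subseteq> (\<lambda>s. K #>\<^bsub>G\<^esub> inv\<^bsub>G\<^esub> s) ` set_power G S n"
    proof
      fix c assume c: "c \<in> ?R"
      then obtain a where a: "a \<in> carrier G" "c = K #>\<^bsub>G\<^esub> a" unfolding RCOSETS_def by blast
      have "inv\<^bsub>G\<^esub> a \<in> set_mult G (set_power G S n) K" using Pn a by simp
      then obtain s k where sk: "s \<in> set_power G S n" "k \<in> K" "inv\<^bsub>G\<^esub> a = s \<otimes>\<^bsub>G\<^esub> k"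
        unfolding set_mult_def by blast
      have sc: "s \<in> carrier G" using sk(1) sp_carrier[OF assms(1,3)] by blast
      have kc: "k \<in> carrier G" using sk Kc by blast
      have "a = inv\<^bsub>G\<^esub> (inv\<^bsub>G\<^esub> a)" using a by simp
      also have "\<dots> = inv\<^bsub>G\<^esub> k \<otimes>\<^bsub>G\<^esub> inv\<^bsub>G\<^esub> s" using sk(3) sc kc inv_mult_group[of s k] by simp
      finally have ae: "a = inv\<^bsub>G\<^esub> k \<otimes>\<^bsub>G\<^esub> inv\<^bsub>G\<^esub> s" .
      have ik: "inv\<^bsub>G\<^esub> k \<in> K" using sk(2) K(1) subgroup.m_inv_closed by fastforce
      have "K #>\<^bsub>G\<^esub> a = (K #>\<^bsub>G\<^esub> inv\<^bsub>G\<^esub> k) #>\<^bsub>G\<^esub> inv\<^bsub>G\<^esub> s" using ae Kc sc kc by (simp add: coset_mult_assoc)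
      also have "\<dots> = K #>\<^bsub>G\<^esub> inv\<^bsub>G\<^esub> s" using coset_join2[OF _ K(1) ik] kc by simp
      finally show "c \<in> (\<lambda>s. K #>\<^bsub>G\<^esub> inv\<^bsub>G\<^esub> s) ` set_power G S n" using a sk(1) by blast
    qed
    have "card ?R \<le> card ((\<lambda>s. K #>\<^bsub>G\<^esub> inv\<^bsub>G\<^esub> s) ` set_power G S n)"
      using sub by (intro card_mono finite_imageI sp_finite assms(2))
    also have "\<dots> \<le> card (set_power G S n)" using sp_finite[OF assms(2)] card_image_le by blast
    finally have "real (card ?R) \<le> C * real n ^ d" using C(2)[of n] Pn by linarith
    then have "real (card ?R) powr (1 / real d) \<le> (C * real n ^ d) powr (1 / real d)"
      by (intro powr_mono2) auto
    also have "\<dots> = C powr (1 / real d) * real n"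
    proof -
      have np: "real n > 0" using Pn by simp
      have "(real n ^ d) powr (1 / real d) = (real n powr real d) powr (1 / real d)"
        using np by (simp add: powr_realpow)
      also have "\<dots> = real n" using assms(7) np by (simp add: powr_powr)
      finally have e: "(real n ^ d) powr (1 / real d) = real n" .
      show ?thesis using C(1) np e by (simp add: powr_mult)
    qed
    finally have "real (card ?R) powr (1 / real d) \<le> C powr (1 / real d) * real n" .
    then show ?thesis using C(1) unfolding eps_def n_def
      by (simp add: field_simps)
  qed
  show ?thesis unfolding unif_almost_flat_cosets_def using eps main by blast
qed

end
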